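(* Let $m\ge 1$, $n\ge 1$ and $k\ge 1$ be integers, and let $F:\mathbb{R}^{m+1}\to\mathbb{R}^{n+1}$ be a form of degree $k$ (every component of $F$ is a homogeneous polynomial of degree $k$) such that $|F(\bar x)|=|\bar x|^k$ for all $\bar x$, so that $F$ restricts to a map $\varphi:\mathbb{S}^m\to\mathbb{S}^n$. Assume $F$ is of minimal degree in its class, i.e. there is no form $G$ of degree strictly smaller than $k$ with $G|_{\mathbb{S}^m}=F|_{\mathbb{S}^m}$. If $\varphi$ is harmonic, then $\varphi$ has constant energy density $e(\varphi)=k(k+m-1)/2$ and $\Delta^0 F=0$ on $\mathbb{R}^{m+1}$.
   Context: $\mathbb{S}^m$ denotes the unit Euclidean sphere in $\mathbb{R}^{m+1}$ with its standard metric. $\Delta^0 F=-\sum_{i=1}^{m+1}\partial^2F/\partial (x^i)^2$ (componentwise Euclidean Laplacian with the geometers' sign convention). The energy density is $e(\varphi)=\frac12|d\varphi|^2$. A map is harmonic if its tension field $\tau(\varphi)=\operatorname{trace}\nabla d\varphi$ vanishes. *)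

theory Defs
  imports "HOL-Analysis.Analysis"
begin

definition hom_poly :: "nat \<Rightarrow> (real^'m \<Rightarrow> real) \<Rightarrow> bool" where
  "hom_poly k p \<longleftrightarrow> (\<exists>c :: ('m \<Rightarrow> nat) \<Rightarrow> real.
      p = (\<lambda>x. \<Sum>a\<in>{a. sum a UNIV = k}. c a * (\<Prod>i\<in>UNIV. (x $ i) ^ a i)))"

definition is_form :: "nat \<Rightarrow> (real^'m \<Rightarrow> real^'n) \<Rightarrow> bool" where
  "is_form k F \<longleftrightarrow> (\<forall>j. hom_poly k (\<lambda>x. F x $ j))"

definition unit_sphere :: "('a::real_normed_vector) set" where
  "unit_sphere = {x. norm x = 1}"

definition tangent_onb :: "real^'m \<Rightarrow> (real^'m) set \<Rightarrow> bool" where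
  "tangent_onb x B \<longleftrightarrow> B \<subseteq> {v. v \<bullet> x = 0} \<and> pairwise orthogonal B
      \<and> (\<forall>e\<in>B. norm e = 1) \<and> span B = {v. v \<bullet> x = 0}"

definition tangent_basis :: "real^'m \<Rightarrow> (real^'m) set" where
  "tangent_basis x = (SOME B. tangent_onb x B)"

definition geod :: "real^'m \<Rightarrow> real^'m \<Rightarrow> real \<Rightarrow> real^'m" where
  "geod x e t = cos t *\<^sub>R x + sin t *\<^sub>R e"

text \<open>d phi (e) and (nabla d phi)(e,e) as vectors of R^(n+1) (before projection to the
target), computed along the geodesic through x in direction e.\<close>
definition dphi :: "(real^'m \<Rightarrow> real^'n) \<Rightarrow> real^'m \<Rightarrow> real^'m \<Rightarrow> real^'n" where
  "dphi F x e = vector_derivative (\<lambda>t. F (geod x e t)) (at 0)"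

definition hess_amb :: "(real^'m \<Rightarrow> real^'n) \<Rightarrow> real^'m \<Rightarrow> real^'m \<Rightarrow> real^'n" where
  "hess_amb F x e = vector_derivative
      (\<lambda>s. vector_derivative (\<lambda>t. F (geod x e t)) (at s)) (at 0)"

text \<open>Tension field of phi = F restricted to the sphere, as a map into the unit sphere of
real^'n: tangential projection (at F x) of the trace of the Hessian.\<close>
definition tension :: "(real^'m \<Rightarrow> real^'n) \<Rightarrow> real^'m \<Rightarrow> real^'n" where
  "tension F x = (let v = (\<Sum>e\<in>tangent_basis x. hess_amb F x e)
                  in v - (v \<bullet> F x) *\<^sub>R F x)"

definition harmonic_sph :: "(real^'m \<Rightarrow> real^'n) \<Rightarrow> bool" where
  "harmonic_sph F \<longleftrightarrow> (\<forall>x\<in>unit_sphere. tension F x = 0)"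

definition energy_density :: "(real^'m \<Rightarrow> real^'n) \<Rightarrow> real^'m \<Rightarrow> real" where
  "energy_density F x = (\<Sum>e\<in>tangent_basis x. (norm (dphi F x e))\<^sup>2) / 2"

text \<open>Euclidean Laplacian with geometers' sign: - sum of pure second partials, componentwise.\<close>
definition second_partial :: "(real^'m \<Rightarrow> real^'n) \<Rightarrow> real^'m \<Rightarrow> real^'m \<Rightarrow> real^'n" where
  "second_partial F x u = vector_derivative
      (\<lambda>s. vector_derivative (\<lambda>t. F (x + t *\<^sub>R u)) (at s)) (at 0)"

definition lap0 :: "(real^'m \<Rightarrow> real^'n) \<Rightarrow> real^'m \<Rightarrow> real^'n" where
  "lap0 F x = - (\<Sum>i\<in>UNIV. second_partial F x (axis i 1))"

end

theory Submission
  imports Defs "HOL-Computational_Algebra.Polynomial" "HOL-Library.FuncSet"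
begin


inductive hp :: "nat \<Rightarrow> (real^'m \<Rightarrow> real) \<Rightarrow> bool" where
  hp_const: "hp 0 (\<lambda>x. c)"
| hp_mul: "hp d p \<Longrightarrow> hp (Suc d) (\<lambda>x. x$i * p x)"
| hp_add: "hp d p \<Longrightarrow> hp d q \<Longrightarrow> hp d (\<lambda>x. p x + q x)"

lemma hp_zero: "hp d (\<lambda>x. 0)"
proof (induction d)
  case 0 show ?case using hp_const[of 0] by simp
next
  case (Suc d) from hp_mul[OF Suc, of undefined] show ?case by simp
qed

lemma hp_scale: "hp d p \<Longrightarrow> hp d (\<lambda>x. c * p x)"
proof (induction rule: hp.induct)
  case (hp_const c') show ?case using hp.hp_const[of "c*c'"] by simp
next
  case (hp_mul d p i) from hp.hp_mul[OF hp_mul.IH, of i] show ?case by (simp add: ac_simps)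
next
  case (hp_add d p q) from hp.hp_add[OF hp_add.IH] show ?case by (simp add: algebra_simps)
qed

lemma hp_neg: "hp d p \<Longrightarrow> hp d (\<lambda>x. - p x)"
  using hp_scale[of d p "-1"] by simp

lemma hp_diff: "hp d p \<Longrightarrow> hp d q \<Longrightarrow> hp d (\<lambda>x. p x - q x)"
  using hp_add[of d p "\<lambda>x. - q x"] hp_neg[of d q] by simp

lemma hp_sum: "finite A \<Longrightarrow> (\<And>a. a \<in> A \<Longrightarrow> hp d (f a)) \<Longrightarrow> hp d (\<lambda>x. \<Sum>a\<in>A. f a x)"
proof (induction A rule: finite_induct)
  case empty then show ?case using hp_zero by simp
next
  case (insert a A) then show ?case using hp_add[of d "f a" "\<lambda>x. \<Sum>a\<in>A. f a x"] by simp
qed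

lemma hp_mult: "hp a p \<Longrightarrow> hp b q \<Longrightarrow> hp (a+b) (\<lambda>x. p x * q x)"
proof (induction rule: hp.induct)
  case (hp_const c) then show ?case using hp_scale by simp
next
  case (hp_mul d p i) from hp.hp_mul[OF hp_mul.IH[OF hp_mul.prems], of i] show ?case by (simp add: ac_simps)
next
  case (hp_add d p q') from hp.hp_add[OF hp_add.IH[OF hp_add.prems]] show ?case by (simp add: algebra_simps)
qed

lemma hp_coord: "hp 1 (\<lambda>x. x$i)"
  using hp_mul[OF hp_const[of 1], of i] by simp

lemma hp_pow: "hp a p \<Longrightarrow> hp (a*n) (\<lambda>x. p x ^ n)"
proof (induction n)
  case 0 then show ?case using hp_const[of 1] by simp
next
  case (Suc n) then show ?case using hp_mult[of a p "a*n" "\<lambda>x. p x ^ n"] by (simp add: ac_simps)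
qed

lemma hp_homog: "hp d p \<Longrightarrow> p (t *\<^sub>R x) = t ^ d * p x"
  by (induction rule: hp.induct) (auto simp: algebra_simps)

lemma hp_at0: "hp d p \<Longrightarrow> d \<ge> 1 \<Longrightarrow> p 0 = 0"
  using hp_homog[of d p 0 0] by (cases d) auto

definition qn :: "real^'m \<Rightarrow> real" where "qn x = (\<Sum>i\<in>UNIV. x$i * x$i)"

lemma qn_norm: "qn x = norm x ^ 2"
  by (simp add: qn_def power2_norm_eq_inner inner_vec_def)

lemma hp_qn: "hp 2 (qn :: real^'m \<Rightarrow> real)"
proof -
  have "hp 2 (\<lambda>x. x$i * x$i)" for i :: 'm using hp_mult[OF hp_coord hp_coord, of i i] by (simp add: numeral_2_eq_2)
  then show ?thesis unfolding qn_def by (intro hp_sum) auto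
qed

definition linepoly :: "(real^'m \<Rightarrow> real) \<Rightarrow> bool" where
  "linepoly p \<longleftrightarrow> (\<forall>x v. \<exists>c. \<forall>t. p (x + t *\<^sub>R v) = poly c t)"

lemma linepoly_const: "linepoly (\<lambda>x. c)"
  unfolding linepoly_def by (intro allI exI[of _ "[:c:]"]) simp

lemma linepoly_coord: "linepoly (\<lambda>x. x$i)"
  unfolding linepoly_def
proof (intro allI)
  fix x v
  show "\<exists>c. \<forall>t. (x + t *\<^sub>R v) $ i = poly c t"
    by (rule exI[of _ "[:x$i, v$i:]"]) (simp add: algebra_simps)
qed

lemma linepoly_add: "linepoly p \<Longrightarrow> linepoly q \<Longrightarrow> linepoly (\<lambda>x. p x + q x)"
  unfolding linepoly_def by (metis poly_add)

lemma linepoly_mult: "linepoly p \<Longrightarrow> linepoly q \<Longrightarrow> linepoly (\<lambda>x. p x * q x)"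
  unfolding linepoly_def by (metis poly_mult)

lemma linepoly_neg: "linepoly p \<Longrightarrow> linepoly (\<lambda>x. - p x)"
  using linepoly_mult[OF linepoly_const[of "-1"]] by simp

lemma linepoly_diff: "linepoly p \<Longrightarrow> linepoly q \<Longrightarrow> linepoly (\<lambda>x. p x - q x)"
  using linepoly_add[OF _ linepoly_neg] by simp

lemma linepoly_pow: "linepoly p \<Longrightarrow> linepoly (\<lambda>x. p x ^ n)"
  by (induction n) (auto intro: linepoly_const dest: linepoly_mult)

lemma hp_linepoly: "hp d p \<Longrightarrow> linepoly p"
  by (induction rule: hp.induct) (auto intro: linepoly_const linepoly_add linepoly_mult linepoly_coord)

lemma linepoly_domain:
  assumes "linepoly p" "linepoly q" "\<And>x. p x * q x = 0"
  shows "(\<forall>x. p x = 0) \<or> (\<forall>x. q x = 0)"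
proof (rule ccontr)
  assume "\<not> ?thesis"
  then obtain a b where a: "p a \<noteq> 0" and b: "q b \<noteq> 0" by auto
  obtain c1 where c1: "\<And>t. p (a + t *\<^sub>R (b - a)) = poly c1 t" using assms(1) unfolding linepoly_def by blast
  obtain c2 where c2: "\<And>t. q (a + t *\<^sub>R (b - a)) = poly c2 t" using assms(2) unfolding linepoly_def by blast
  have "poly (c1 * c2) = poly 0" using assms(3) c1 c2 by (auto simp: fun_eq_iff) (metis)
  then have "c1 * c2 = 0" using poly_eq_poly_eq_iff by blast
  moreover have "c1 \<noteq> 0" using c1[of 0] a by auto
  moreover have "c2 \<noteq> 0" using c2[of 1] b by auto
  ultimately show False by simp
qed



definition mono_m :: "('m::finite \<Rightarrow> nat) \<Rightarrow> real^'m \<Rightarrow> real" where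
  "mono_m a x = (\<Prod>i\<in>UNIV. (x $ i) ^ a i)"

definition Sdeg :: "nat \<Rightarrow> ('m::finite \<Rightarrow> nat) set" where
  "Sdeg k = {a. sum a UNIV = k}"

lemma finite_Sdeg: "finite (Sdeg k :: ('m::finite \<Rightarrow> nat) set)"
proof -
  have "Sdeg k \<subseteq> Pi\<^sub>E (UNIV::'m set) (\<lambda>_. {..k})"
  proof
    fix a :: "'m \<Rightarrow> nat" assume "a \<in> Sdeg k"
    then have "a i \<le> k" for i unfolding Sdeg_def using member_le_sum[of i UNIV a] by auto
    then show "a \<in> Pi\<^sub>E UNIV (\<lambda>_. {..k})" by (simp add: PiE_UNIV_domain)
  qed
  moreover have "finite (Pi\<^sub>E (UNIV::'m set) (\<lambda>_. {..k}))" by (intro finite_PiE) auto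
  ultimately show ?thesis by (rule finite_subset)
qed

lemma hom_poly_alt: "hom_poly k p \<longleftrightarrow> (\<exists>c. p = (\<lambda>x. \<Sum>a\<in>Sdeg k. c a * mono_m a x))"
  unfolding hom_poly_def Sdeg_def mono_m_def by simp

lemma hp_monoA: "finite A \<Longrightarrow> hp (sum a A) (\<lambda>x::real^'m::finite. \<Prod>i\<in>A. (x $ i) ^ a i)"
proof (induction A rule: finite_induct)
  case empty then show ?case using hp_const[of 1] by simp
next
  case (insert j A)
  have "hp (1 * a j) (\<lambda>x::real^'m. (x$j) ^ a j)" by (rule hp_pow[OF hp_coord])
  from hp_mult[OF this insert.IH] insert.hyps show ?case by simp
qed

lemma hom_poly_hp: "hom_poly k p \<Longrightarrow> hp k p"
  unfolding hom_poly_alt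
proof (elim exE)
  fix c assume p: "p = (\<lambda>x. \<Sum>a\<in>Sdeg k. c a * mono_m a x)"
  have "hp k (mono_m a)" if "a \<in> Sdeg k" for a
    using hp_monoA[of UNIV a] that unfolding Sdeg_def mono_m_def by simp
  then show "hp k p" unfolding p by (intro hp_sum finite_Sdeg hp_scale) auto
qed

lemma mono_m_upd: "mono_m (a(i := a i + 1)) x = x$i * mono_m a x"
proof -
  have "mono_m (a(i := a i + 1)) x = (\<Prod>j\<in>UNIV. (x$j)^a j * (if j = i then x$j else 1))"
    unfolding mono_m_def by (intro prod.cong) auto
  also have "\<dots> = mono_m a x * x$i" unfolding mono_m_def prod.distrib by (simp add: prod.delta)
  finally show ?thesis by simp
qed

lemma sum_upd: fixes a :: "'m::finite \<Rightarrow> nat" shows "sum (a(i := v)) UNIV = sum a UNIV - a i + (v::nat)"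
proof -
  have "sum (a(i := v)) UNIV = (a(i:=v)) i + sum (a(i := v)) (UNIV - {i})" by (rule sum.remove) auto
  then have "sum (a(i := v)) UNIV = v + sum (a(i := v)) (UNIV - {i})" by simp
  also have "sum (a(i := v)) (UNIV - {i}) = sum a (UNIV - {i})" by (intro sum.cong) auto
  also have "sum a (UNIV - {i}) = sum a UNIV - a i" by (simp add: sum.remove[of UNIV i])
  finally show ?thesis by simp
qed

lemma hp_hom_poly: "hp k p \<Longrightarrow> hom_poly k (p :: real^'m::finite \<Rightarrow> real)"
proof (induction rule: hp.induct)
  case (hp_const c)
  have S0: "Sdeg 0 = {(\<lambda>_. 0) :: 'm \<Rightarrow> nat}" unfolding Sdeg_def by (auto simp: fun_eq_iff)
  show ?case unfolding hom_poly_alt S0 by (intro exI[of _ "\<lambda>_. c"]) (simp add: mono_m_def)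
next
  case (hp_mul d p i)
  then obtain c where p: "p = (\<lambda>x. \<Sum>a\<in>Sdeg d. c a * mono_m a x)" unfolding hom_poly_alt by blast
  define g where "g a = a(i := a i + 1)" for a :: "'m \<Rightarrow> nat"
  define c' where "c' b = (if b i \<ge> 1 then c (b(i := b i - 1)) else 0)" for b :: "'m \<Rightarrow> nat"
  have gS: "g ` Sdeg d \<subseteq> Sdeg (Suc d)"
  proof
    fix b assume "b \<in> g ` Sdeg d"
    then obtain a where a: "a \<in> Sdeg d" "b = g a" by blast
    have "a i \<le> sum a UNIV" by (rule member_le_sum) auto
    then show "b \<in> Sdeg (Suc d)" using a sum_upd[of a i "a i + 1"] unfolding g_def Sdeg_def by simp
  qed
  have injg: "inj g" unfolding g_def inj_def by (auto simp: fun_eq_iff)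
  have c'g: "c' (g a) = c a" for a unfolding c'_def g_def by simp
  have out: "c' b = 0" if "b \<in> Sdeg (Suc d) - g ` Sdeg d" for b
  proof (rule ccontr)
    assume "c' b \<noteq> 0"
    then have bi: "b i \<ge> 1" unfolding c'_def by (auto split: if_splits)
    define a where "a = b(i := b i - 1)"
    have "g a = b" unfolding a_def g_def using bi by (auto simp: fun_eq_iff)
    moreover have "a \<in> Sdeg d"
    proof -
      have "b i \<le> sum b UNIV" by (rule member_le_sum) auto
      then show ?thesis using that bi sum_upd[of b i "b i - 1"] unfolding Sdeg_def a_def by simp
    qed
    ultimately show False using that by blast
  qed
  have "(\<lambda>x. x$i * p x) = (\<lambda>x. \<Sum>b\<in>Sdeg (Suc d). c' b * mono_m b x)"
  proof
    fix x
    have "x$i * p x = (\<Sum>a\<in>Sdeg d. c a * mono_m (g a) x)"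
      unfolding p g_def mono_m_upd by (simp add: sum_distrib_left algebra_simps)
    also have "\<dots> = (\<Sum>a\<in>Sdeg d. c' (g a) * mono_m (g a) x)" by (simp only: c'g)
    also have "\<dots> = (\<Sum>b\<in>g ` Sdeg d. c' b * mono_m b x)"
      using sum.reindex[of g "Sdeg d" "\<lambda>b. c' b * mono_m b x"] injg by (simp add: inj_on_def inj_def)
    also have "\<dots> = (\<Sum>b\<in>Sdeg (Suc d). c' b * mono_m b x)"
      by (intro sum.mono_neutral_left finite_Sdeg gS) (simp add: out)
    finally show "x$i * p x = (\<Sum>b\<in>Sdeg (Suc d). c' b * mono_m b x)" .
  qed
  then show ?case unfolding hom_poly_alt by blast
next
  case (hp_add d p q)
  then obtain c1 c2 where "p = (\<lambda>x. \<Sum>a\<in>Sdeg d. c1 a * mono_m a x)" "q = (\<lambda>x. \<Sum>a\<in>Sdeg d. c2 a * mono_m a x)"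
    unfolding hom_poly_alt by blast
  then show ?case unfolding hom_poly_alt
    by (intro exI[of _ "\<lambda>a. c1 a + c2 a"]) (simp add: algebra_simps sum.distrib)
qed

lemma hom_poly_iff_hp: "hom_poly k p \<longleftrightarrow> hp k p"
  using hom_poly_hp hp_hom_poly by blast



definition indep :: "'m::finite \<Rightarrow> (real^'m \<Rightarrow> real) \<Rightarrow> bool" where
  "indep i0 U \<longleftrightarrow> (\<forall>x t. U (x + t *\<^sub>R axis i0 1) = U x)"

definition rr :: "'m::finite \<Rightarrow> real^'m \<Rightarrow> real" where
  "rr i0 x = (\<Sum>i\<in>UNIV-{i0}. x$i * x$i)"

lemma qn_rr: "qn x = x$i0 * x$i0 + rr i0 x"
  unfolding qn_def rr_def by (simp add: sum.remove[of UNIV i0])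

lemma hp_rr: "hp 2 (rr i0)"
proof -
  have "hp 2 (\<lambda>x. x$i * x$i)" for i using hp_mult[OF hp_coord hp_coord, of i i] by (simp add: numeral_2_eq_2)
  then show ?thesis unfolding rr_def by (intro hp_sum) auto
qed

lemma indep_rr: "indep i0 (rr i0)"
  unfolding indep_def rr_def by (auto intro!: sum.cong simp: axis_def)

lemma indep_const: "indep i0 (\<lambda>x. c)" unfolding indep_def by simp
lemma indep_add: "indep i0 U \<Longrightarrow> indep i0 V \<Longrightarrow> indep i0 (\<lambda>x. U x + V x)" unfolding indep_def by simp
lemma indep_mult: "indep i0 U \<Longrightarrow> indep i0 V \<Longrightarrow> indep i0 (\<lambda>x. U x * V x)" unfolding indep_def by simp
lemma indep_coord: "i \<noteq> i0 \<Longrightarrow> indep i0 (\<lambda>x. x$i)" unfolding indep_def by (simp add: axis_def)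

lemma decomp:
  fixes A :: "real^'m::finite \<Rightarrow> real"
  assumes "hp d A"
  shows "\<exists>Q B C. (if 2 \<le> d then hp (d-2) Q else Q = (\<lambda>x. 0)) \<and>
     (if 1 \<le> d then hp (d-1) B else B = (\<lambda>x. 0)) \<and> hp d C \<and> indep i0 B \<and> indep i0 C \<and>
     (\<forall>x. A x = qn x * Q x + x$i0 * B x + C x)"
  using assms
proof (induction rule: hp.induct)
  case (hp_const c)
  show ?case by (rule exI[of _ "\<lambda>x. 0"], rule exI[of _ "\<lambda>x. 0"], rule exI[of _ "\<lambda>x. c"])
    (simp add: hp.hp_const indep_const)
next
  case (hp_mul d p i)
  then obtain Q B C where Q: "if 2 \<le> d then hp (d-2) Q else Q = (\<lambda>x. 0)"
    and B: "if 1 \<le> d then hp (d-1) B else B = (\<lambda>x. 0)" and C: "hp d C" and iB: "indep i0 B"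
    and iC: "indep i0 C" and eq: "\<forall>x. p x = qn x * Q x + x$i0 * B x + C x" by blast
  show ?case
  proof (cases "i = i0")
    case False
    have Q': "if 2 \<le> Suc d then hp (Suc d-2) (\<lambda>x. x$i * Q x) else (\<lambda>x. x$i * Q x) = (\<lambda>x. 0)"
    proof (cases "2 \<le> d")
      case True
      have e: "Suc (d-2) = Suc d - 2" using True by arith
      then show ?thesis using True Q hp.hp_mul[of "d-2" Q i] by (simp only: e) simp
    next
      case False then show ?thesis using Q hp_zero by auto
    qed
    have B': "if 1 \<le> Suc d then hp (Suc d-1) (\<lambda>x. x$i * B x) else (\<lambda>x. x$i * B x) = (\<lambda>x. 0)"
    proof (cases "1 \<le> d")
      case True then show ?thesis using B hp.hp_mul[of "d-1" B i] by (simp add: Suc_diff_le)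
    next
      case False then show ?thesis using B hp_zero by auto
    qed
    show ?thesis
      apply (rule exI[of _ "\<lambda>x. x$i * Q x"], rule exI[of _ "\<lambda>x. x$i * B x"], rule exI[of _ "\<lambda>x. x$i * C x"])
      using Q' B' hp.hp_mul[OF C, of i] indep_mult[OF indep_coord[OF False] iB] indep_mult[OF indep_coord[OF False] iC] eq
      by (simp add: algebra_simps)
  next
    case True
    have Q': "if 2 \<le> Suc d then hp (Suc d-2) (\<lambda>x. x$i0 * Q x + B x) else (\<lambda>x. x$i0 * Q x + B x) = (\<lambda>x. 0)"
    proof (cases "2 \<le> d")
      case True
      have e: "Suc (d-2) = d - 1" using True by arith
      show ?thesis using True Q B hp.hp_mul[of "d-2" Q i0] hp_add[of "d-1" "\<lambda>x. x$i0 * Q x" B]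
        by (simp only: e) simp
    next
      case False
      show ?thesis
      proof (cases "d = 1")
        case True then show ?thesis using Q B False hp_zero by auto
      next
        case False2: False
        then have "d = 0" using False by simp
        then show ?thesis using Q B by auto
      qed
    qed
    have C': "hp (Suc d) (\<lambda>x. - (rr i0 x * B x))"
    proof (cases "1 \<le> d")
      case True then show ?thesis using B hp_neg[OF hp_mult[OF hp_rr B[simplified True, simplified]]]
        by (simp add: Suc_diff_le)
    next
      case False then show ?thesis using B hp_zero by auto
    qed
    show ?thesis
      apply (rule exI[of _ "\<lambda>x. x$i0 * Q x + B x"], rule exI[of _ C], rule exI[of _ "\<lambda>x. - (rr i0 x * B x)"])
      apply (intro conjI)
           apply (rule Q'[unfolded True])
          apply (simp add: C)
         apply (rule C')
        apply (rule iC)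
       apply (unfold indep_def, intro allI)
       using indep_mult[OF indep_rr iB, unfolded indep_def] apply simp
      apply (intro allI)
      apply (simp add: eq qn_rr[of _ i0] algebra_simps True)
      done
  qed
next
  case (hp_add d p q)
  then obtain Q B C where Q: "if 2 \<le> d then hp (d-2) Q else Q = (\<lambda>x. 0)"
    and B: "if 1 \<le> d then hp (d-1) B else B = (\<lambda>x. 0)" and C: "hp d C" and iB: "indep i0 B"
    and iC: "indep i0 C" and eq: "\<forall>x. p x = qn x * Q x + x$i0 * B x + C x" by blast
  obtain Q2 B2 C2 where Q2: "if 2 \<le> d then hp (d-2) Q2 else Q2 = (\<lambda>x. 0)"
    and B2: "if 1 \<le> d then hp (d-1) B2 else B2 = (\<lambda>x. 0)" and C2: "hp d C2" and iB2: "indep i0 B2"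
    and iC2: "indep i0 C2" and eq2: "\<forall>x. q x = qn x * Q2 x + x$i0 * B2 x + C2 x" using hp_add by blast
  show ?case
    apply (rule exI[of _ "\<lambda>x. Q x + Q2 x"], rule exI[of _ "\<lambda>x. B x + B2 x"], rule exI[of _ "\<lambda>x. C x + C2 x"])
    using Q Q2 B B2 hp.hp_add[OF C C2] indep_add[OF iB iB2] indep_add[OF iC iC2] eq eq2
    by (auto simp: algebra_simps intro: hp.hp_add split: if_splits)
qed



lemma uniq:
  fixes U V W :: "real^'m::finite \<Rightarrow> real"
  assumes iU: "indep i0 U" and iV: "indep i0 V" and W: "linepoly W"
    and eq: "\<And>x. x$i0 * U x + V x = qn x * W x"
  shows "U x = 0 \<and> V x = 0"
proof -
  define e where "e = (axis i0 1 :: real^'m)"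
  define y where "y = x + (- (x$i0)) *\<^sub>R e"
  have Uy: "U y = U x" using iU unfolding indep_def y_def e_def by blast
  have Vy: "V y = V x" using iV unfolding indep_def y_def e_def by blast
  obtain c where c: "\<And>t. W (y + t *\<^sub>R e) = poly c t" using W unfolding linepoly_def by blast
  have yi: "(y + t *\<^sub>R e) $ i0 = t" for t unfolding y_def e_def by (simp add: axis_def)
  have ry: "rr i0 (y + t *\<^sub>R e) = rr i0 y" for t using indep_rr[of i0] unfolding indep_def e_def by blast
  have "t * U x + V x = (t * t + rr i0 y) * poly c t" for t
  proof -
    have "U (y + t *\<^sub>R e) = U x" "V (y + t *\<^sub>R e) = V x" using iU iV Uy Vy unfolding indep_def e_def by auto
    then show ?thesis using eq[of "y + t *\<^sub>R e"] yi[of t] ry[of t] c[of t] qn_rr[of "y + t *\<^sub>R e" i0] by simp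
  qed
  then have "poly [:V x, U x:] = poly ([:rr i0 y, 0, 1:] * c)" by (auto simp: fun_eq_iff algebra_simps)
  then have pe: "[:V x, U x:] = [:rr i0 y, 0, 1:] * c" using poly_eq_poly_eq_iff by blast
  have "c = 0"
  proof (rule ccontr)
    assume "c \<noteq> 0"
    then have "degree ([:rr i0 y, 0, 1:] * c) = 2 + degree c" by (subst degree_mult_eq) auto
    moreover have "degree [:V x, U x:] \<le> 1" by simp
    ultimately show False using pe by simp
  qed
  then show ?thesis using pe by simp
qed

lemma real_key:
  fixes r b1 c1 b2 c2 :: real
  assumes r: "r \<ge> 0" and V: "c1 * c2 = r * (b1 * b2)" and U: "b1 * c2 = - (b2 * c1)"
  shows "c1 * c2 = 0 \<and> r * (b1 * c2) = 0 \<and> r * (b2 * c1) = 0 \<and> r * (b1 * b2) = 0"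
proof -
  have "(c1*c2)^2 = r * ((b1*c2) * (b2*c1))" using V by (simp add: power2_eq_square algebra_simps)
  also have "\<dots> = - (r * (b1*c2)^2)" using U by (simp add: power2_eq_square algebra_simps)
  finally have s: "(c1*c2)^2 + r * (b1*c2)^2 = 0" by simp
  have a: "(c1*c2)^2 \<ge> 0" "r * (b1*c2)^2 \<ge> 0" using r by auto
  have "(c1*c2)^2 = 0" using s a by linarith
  then have 1: "c1*c2 = 0" by simp
  have "r * (b1*c2)^2 = 0" using s a by linarith
  then have 2: "r * (b1*c2) = 0" by simp
  have 3: "r * (b2*c1) = 0" using 2 U by simp
  have 4: "r * (b1*b2) = 0" using 1 V by simp
  show ?thesis using 1 2 3 4 by blast
qed

lemma rr_nonneg: "rr i0 x \<ge> 0" unfolding rr_def by (intro sum_nonneg) auto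

lemma rr_nonzero:
  assumes "CARD('m::finite) \<ge> 2"
  shows "\<exists>x::real^'m. rr i0 x \<noteq> 0"
proof -
  obtain l :: 'm where l: "l \<noteq> i0"
  proof -
    have "UNIV - {i0} \<noteq> {}"
    proof
      assume "UNIV - {i0} = {}"
      then have "UNIV = {i0}" by auto
      then have "CARD('m) = card {i0}" by (metis)
      then have "CARD('m) = 1" by simp
      then show False using assms by simp
    qed
    then show ?thesis using that by blast
  qed
  have "rr i0 (axis l 1) = (\<Sum>i\<in>UNIV-{i0}. if i = l then 1 else 0)"
    unfolding rr_def by (intro sum.cong) (auto simp: axis_def)
  also have "\<dots> = 1" using l by simp
  finally show ?thesis by (intro exI[of _ "axis l 1"]) simp
qed

definition nondiv :: "nat \<Rightarrow> (real^'m::finite \<Rightarrow> real) \<Rightarrow> bool" where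
  "nondiv k F \<longleftrightarrow> \<not> (\<exists>H. hp (k-2) H \<and> (\<forall>x. F x = qn x * H x))"

lemma prime_step:
  fixes A Fj W :: "real^'m::finite \<Rightarrow> real"
  assumes card: "CARD('m) \<ge> 2" and A: "hp d A" and F: "hp k Fj" and nd: "nondiv k Fj" and W: "linepoly W"
    and eq: "\<And>x. A x * Fj x = qn x * W x"
  shows "\<exists>Q. (if 2 \<le> d then hp (d-2) Q else Q = (\<lambda>x. 0)) \<and> (\<forall>x. A x = qn x * Q x)"
proof -
  fix i0 :: 'm
  obtain Q1 B1 C1 where Q1: "if 2 \<le> d then hp (d-2) Q1 else Q1 = (\<lambda>x. 0)"
    and B1: "if 1 \<le> d then hp (d-1) B1 else B1 = (\<lambda>x. 0)" and C1: "hp d C1" and iB1: "indep i0 B1"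
    and iC1: "indep i0 C1" and eq1: "\<forall>x. A x = qn x * Q1 x + x$i0 * B1 x + C1 x"
    using decomp[OF A, of i0] by blast
  obtain Q2 B2 C2 where Q2: "if 2 \<le> k then hp (k-2) Q2 else Q2 = (\<lambda>x. 0)"
    and B2: "if 1 \<le> k then hp (k-1) B2 else B2 = (\<lambda>x. 0)" and C2: "hp k C2" and iB2: "indep i0 B2"
    and iC2: "indep i0 C2" and eq2: "\<forall>x. Fj x = qn x * Q2 x + x$i0 * B2 x + C2 x"
    using decomp[OF F, of i0] by blast
  have lQ1: "linepoly Q1" using Q1 hp_linepoly linepoly_const by (auto split: if_splits)
  have lQ2: "linepoly Q2" using Q2 hp_linepoly linepoly_const by (auto split: if_splits)
  have lB1: "linepoly B1" using B1 hp_linepoly linepoly_const by (auto split: if_splits)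
  have lB2: "linepoly B2" using B2 hp_linepoly linepoly_const by (auto split: if_splits)
  have lC1: "linepoly C1" using C1 hp_linepoly by auto
  have lC2: "linepoly C2" using C2 hp_linepoly by auto
  have lF: "linepoly Fj" using F hp_linepoly by auto
  have lr: "linepoly (rr i0)" using hp_rr hp_linepoly by blast
  define U where "U x = B1 x * C2 x + B2 x * C1 x" for x
  define V where "V x = C1 x * C2 x - rr i0 x * (B1 x * B2 x)" for x
  define W' where "W' x = W x - Q1 x * Fj x - Q2 x * (x$i0 * B1 x + C1 x) - B1 x * B2 x" for x
  have lW': "linepoly W'" unfolding W'_def
    by (intro linepoly_diff linepoly_mult linepoly_add W lQ1 lQ2 lF lB1 lB2 lC1 linepoly_coord)
  have iU: "indep i0 U" unfolding U_def by (intro indep_add indep_mult iB1 iB2 iC1 iC2)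
  have iV: "indep i0 V" unfolding V_def using indep_add[OF indep_mult[OF iC1 iC2] indep_mult[OF indep_const[of i0 "-1"] indep_mult[OF indep_rr indep_mult[OF iB1 iB2]]]]
    by simp
  have eqU: "x$i0 * U x + V x = qn x * W' x" for x
  proof -
    have "qn x * W x = A x * Fj x" using eq by simp
    also have "\<dots> = (qn x * Q1 x + x$i0 * B1 x + C1 x) * (qn x * Q2 x + x$i0 * B2 x + C2 x)" using eq1 eq2 by simp
    finally have h: "qn x * W x = (qn x * Q1 x + x$i0 * B1 x + C1 x) * Fj x"
      using eq2 by simp
    have "x$i0 * U x + V x = (x$i0 * B1 x + C1 x) * (x$i0 * B2 x + C2 x) - qn x * (B1 x * B2 x)"
      unfolding U_def V_def using qn_rr[of x i0] by (simp add: algebra_simps)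
    also have "\<dots> = (x$i0 * B1 x + C1 x) * (Fj x - qn x * Q2 x) - qn x * (B1 x * B2 x)"
      using eq2 by simp
    also have "\<dots> = qn x * W x - qn x * Q1 x * Fj x - qn x * Q2 x * (x$i0 * B1 x + C1 x) - qn x * (B1 x * B2 x)"
      using h by (simp add: algebra_simps)
    also have "\<dots> = qn x * W' x" unfolding W'_def by (simp add: algebra_simps)
    finally show ?thesis .
  qed
  have UV: "U x = 0 \<and> V x = 0" for x using uniq[OF iU iV lW' eqU] by blast
  have key: "C1 x * C2 x = 0 \<and> rr i0 x * (B1 x * C2 x) = 0 \<and> rr i0 x * (B2 x * C1 x) = 0 \<and> rr i0 x * (B1 x * B2 x) = 0" for x
  proof -
    have h1: "C1 x * C2 x = rr i0 x * (B1 x * B2 x)" using UV[of x] unfolding V_def by simp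
    have h2: "B1 x * C2 x = - (B2 x * C1 x)" using UV[of x] unfolding U_def by simp
    show ?thesis by (rule real_key[OF rr_nonneg h1 h2])
  qed
  have rnz: "\<not> (\<forall>x. rr i0 x = 0)" using rr_nonzero[OF card, of i0] by blast
  have p1: "(\<forall>x. B1 x * C2 x = 0)"
    using linepoly_domain[OF lr linepoly_mult[OF lB1 lC2]] key rnz by blast
  have p2: "(\<forall>x. B2 x * C1 x = 0)"
    using linepoly_domain[OF lr linepoly_mult[OF lB2 lC1]] key rnz by blast
  have p3: "(\<forall>x. B1 x * B2 x = 0)"
    using linepoly_domain[OF lr linepoly_mult[OF lB1 lB2]] key rnz by blast
  have p4: "(\<forall>x. C1 x * C2 x = 0)" using key by blast
  have d1: "(\<forall>x. B1 x = 0) \<or> (\<forall>x. C2 x = 0)" using linepoly_domain[OF lB1 lC2] p1 by blast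
  have d2: "(\<forall>x. B2 x = 0) \<or> (\<forall>x. C1 x = 0)" using linepoly_domain[OF lB2 lC1] p2 by blast
  have d3: "(\<forall>x. B1 x = 0) \<or> (\<forall>x. B2 x = 0)" using linepoly_domain[OF lB1 lB2] p3 by blast
  have d4: "(\<forall>x. C1 x = 0) \<or> (\<forall>x. C2 x = 0)" using linepoly_domain[OF lC1 lC2] p4 by blast
  have notF: "\<not> ((\<forall>x. B2 x = 0) \<and> (\<forall>x. C2 x = 0))"
  proof
    assume h: "(\<forall>x. B2 x = 0) \<and> (\<forall>x. C2 x = 0)"
    have "hp (k-2) Q2" using Q2 hp_zero by (auto split: if_splits)
    moreover have "\<forall>x. Fj x = qn x * Q2 x" using eq2 h by simp
    ultimately show False using nd unfolding nondiv_def by blast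
  qed
  have "(\<forall>x. B1 x = 0) \<and> (\<forall>x. C1 x = 0)" using d1 d2 d3 d4 notF by blast
  then show ?thesis using Q1 eq1 by (intro exI[of _ Q1]) auto
qed



lemma qn_pos: "x \<noteq> 0 \<Longrightarrow> qn x > 0" by (simp add: qn_norm)
lemma qn_0: "qn 0 = 0" by (simp add: qn_norm)

lemma alg:
  fixes Fj P G :: "real^'m::finite \<Rightarrow> real"
  assumes card: "CARD('m) \<ge> 2" and k: "k \<ge> 1" and F: "hp k Fj" and nd: "nondiv k Fj"
    and P: "hp (2*k-2) P" and G: "linepoly G" and eq: "\<And>x. P x * Fj x = qn x ^ k * G x"
  shows "P x = 0"
proof -
  have F0: "Fj 0 = 0" using hp_at0[OF F k] .
  have step: "\<exists>Q. (if 2 \<le> 2*k-2-2*i then hp (2*k-2-2*i-2) Q else Q = (\<lambda>x. 0)) \<and> (\<forall>x. Pi x = qn x * Q x)"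
    if i: "i \<le> k - 1" and Pi: "hp (2*k-2-2*i) Pi" and Peq: "\<forall>x. P x = qn x ^ i * Pi x" for i Pi
  proof (rule prime_step[OF card Pi F nd])
    show "linepoly (\<lambda>x. qn x ^ (k-i-1) * G x)"
      by (intro linepoly_mult linepoly_pow G hp_linepoly[OF hp_qn])
    show "Pi x * Fj x = qn x * (qn x ^ (k - i - 1) * G x)" for x
    proof (cases "x = 0")
      case True then show ?thesis using F0 by (simp add: qn_norm)
    next
      case False
      then have q: "qn x > 0" by (rule qn_pos)
      have "qn x ^ i * (Pi x * Fj x) = qn x ^ i * (qn x * (qn x ^ (k - i - 1) * G x))"
      proof -
        have "qn x ^ i * (Pi x * Fj x) = qn x ^ k * G x" using eq[of x] Peq by (simp add: algebra_simps)
        also have "qn x ^ k = qn x ^ i * (qn x * qn x ^ (k - i - 1))"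
          using i k by (simp flip: power_add power_Suc)
        finally show ?thesis by (simp add: algebra_simps)
      qed
      then show ?thesis using q by simp
    qed
  qed
  have ind: "\<exists>Pi. hp (2*k-2-2*i) Pi \<and> (\<forall>x. P x = qn x ^ i * Pi x)" if "i \<le> k - 1" for i
    using that
  proof (induction i)
    case 0 then show ?case using P by (intro exI[of _ P]) simp
  next
    case (Suc i)
    then obtain Pi where Pi: "hp (2*k-2-2*i) Pi" "\<forall>x. P x = qn x ^ i * Pi x" by auto
    obtain Q where Q: "if 2 \<le> 2*k-2-2*i then hp (2*k-2-2*i-2) Q else Q = (\<lambda>x. 0)" "\<forall>x. Pi x = qn x * Q x"
      using step[OF _ Pi] Suc by auto
    have "2 \<le> 2*k-2-2*i" using Suc by simp
    then have "hp (2*k-2-2*Suc i) Q" using Q(1) by (simp add: diff_mult_distrib2)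
    then show ?case using Pi Q by (intro exI[of _ Q]) (simp add: algebra_simps)
  qed
  obtain Pi where Pi: "hp (2*k-2-2*(k-1)) Pi" "\<forall>x. P x = qn x ^ (k-1) * Pi x" using ind by blast
  obtain Q where Q: "if 2 \<le> 2*k-2-2*(k-1) then hp (2*k-2-2*(k-1)-2) Q else Q = (\<lambda>x. 0)" "\<forall>x. Pi x = qn x * Q x"
    using step[OF _ Pi] by auto
  have "Q = (\<lambda>x. 0)" using Q(1) k by (simp add: diff_mult_distrib2 split: if_splits)
  then show ?thesis using Pi Q by simp
qed



definition pd :: "'m::finite \<Rightarrow> (real^'m \<Rightarrow> real) \<Rightarrow> real^'m \<Rightarrow> real" where
  "pd i p x = frechet_derivative p (at x) (axis i 1)"

lemma hp_deriv_ex: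
  fixes p :: "real^'m::finite \<Rightarrow> real"
  assumes "hp d p"
  shows "\<exists>D. (\<forall>i. hp (d-1) (D i)) \<and> (d = 0 \<longrightarrow> (\<forall>i. D i = (\<lambda>x. 0))) \<and>
     (\<forall>x. (p has_derivative (\<lambda>h. \<Sum>i\<in>UNIV. h$i * D i x)) (at x))"
  using assms
proof (induction rule: hp.induct)
  case (hp_const c)
  have "((\<lambda>x. c) has_derivative (\<lambda>h. \<Sum>i\<in>UNIV. h$i * 0)) (at x)" for x :: "real^'m"
    using has_derivative_const[of c "at x"] by (rule has_derivative_eq_rhs) simp
  then show ?case using hp_zero by (intro exI[of _ "\<lambda>i x. 0"]) auto
next
  case (hp_mul d p i)
  then obtain D where D: "\<forall>l. hp (d-1) (D l)" "d = 0 \<longrightarrow> (\<forall>l. D l = (\<lambda>x. 0))"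
    "\<forall>x. (p has_derivative (\<lambda>h. \<Sum>l\<in>UNIV. h$l * D l x)) (at x)" by blast
  define D' where "D' l x = x$i * D l x + (if l = i then p x else 0)" for l x
  have hD': "hp d (D' l)" for l
  proof -
    have a: "hp d (\<lambda>x. x$i * D l x)"
    proof (cases "d = 0")
      case True then show ?thesis using D(2) hp_zero by simp
    next
      case False then show ?thesis using hp.hp_mul[OF D(1)[rule_format, of l], of i] by simp
    qed
    have b: "hp d (\<lambda>x. if l = i then p x else 0)" using hp_mul(1) hp_zero by (cases "l = i") auto
    show ?thesis unfolding D'_def using hp_add[OF a b] by simp
  qed
  have der: "((\<lambda>x. x$i * p x) has_derivative (\<lambda>h. \<Sum>l\<in>UNIV. h$l * D' l x)) (at x)" for x
  proof -
    have lin: "((\<lambda>x::real^'m. x$i) has_derivative (\<lambda>h. h$i)) (at x)"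
      by (rule bounded_linear_imp_has_derivative) (rule bounded_linear_vec_nth)
    have e: "(\<Sum>l\<in>UNIV. h$l * D' l x) = x$i * (\<Sum>l\<in>UNIV. h$l * D l x) + h$i * p x" for h
    proof -
      have "(\<Sum>l\<in>UNIV. h$l * D' l x) = (\<Sum>l\<in>UNIV. x$i * (h$l * D l x) + (if l = i then h$i * p x else 0))"
        unfolding D'_def by (intro sum.cong) (auto simp: algebra_simps)
      also have "\<dots> = x$i * (\<Sum>l\<in>UNIV. h$l * D l x) + h$i * p x"
        by (simp add: sum.distrib sum_distrib_left)
      finally show ?thesis .
    qed
    from has_derivative_mult[OF lin D(3)[rule_format, of x]]
    show ?thesis
      by (rule has_derivative_eq_rhs) (simp add: fun_eq_iff e)
  qed
  show ?case using hD' der by (intro exI[of _ D']) auto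
next
  case (hp_add d p q)
  obtain D1 where D1: "\<forall>l. hp (d-1) (D1 l)" "d = 0 \<longrightarrow> (\<forall>l. D1 l = (\<lambda>x. 0))"
    "\<forall>x. (p has_derivative (\<lambda>h. \<Sum>l\<in>UNIV. h$l * D1 l x)) (at x)" using hp_add.IH(1) by blast
  obtain D2 where D2: "\<forall>l. hp (d-1) (D2 l)" "d = 0 \<longrightarrow> (\<forall>l. D2 l = (\<lambda>x. 0))"
    "\<forall>x. (q has_derivative (\<lambda>h. \<Sum>l\<in>UNIV. h$l * D2 l x)) (at x)" using hp_add.IH(2) by blast
  show ?case
  proof (intro exI[of _ "\<lambda>l x. D1 l x + D2 l x"] conjI allI impI)
    fix l show "hp (d-1) (\<lambda>x. D1 l x + D2 l x)" using D1(1) D2(1) by (intro hp.hp_add) auto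
  next
    fix l assume "d = 0" then show "(\<lambda>x. D1 l x + D2 l x) = (\<lambda>x. 0)" using D1(2) D2(2) by simp
  next
    fix x
    from has_derivative_add[OF D1(3)[rule_format, of x] D2(3)[rule_format, of x]]
    show "((\<lambda>x. p x + q x) has_derivative (\<lambda>h. \<Sum>l\<in>UNIV. h$l * (D1 l x + D2 l x))) (at x)"
      by (rule has_derivative_eq_rhs) (simp add: fun_eq_iff distrib_left sum.distrib)
  qed
qed

lemma hp_pd:
  fixes p :: "real^'m::finite \<Rightarrow> real"
  assumes "hp d p"
  shows "hp (d-1) (pd i p)" "d = 0 \<Longrightarrow> pd i p = (\<lambda>x. 0)"
    "(p has_derivative (\<lambda>h. \<Sum>i\<in>UNIV. h$i * pd i p x)) (at x)"
proof -
  obtain D where D: "\<forall>i. hp (d-1) (D i)" "d = 0 \<longrightarrow> (\<forall>i. D i = (\<lambda>x. 0))"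
     "\<forall>x. (p has_derivative (\<lambda>h. \<Sum>i\<in>UNIV. h$i * D i x)) (at x)" using hp_deriv_ex[OF assms] by blast
  have e: "pd i p = D i" for i
  proof
    fix x
    have "frechet_derivative p (at x) = (\<lambda>h. \<Sum>i\<in>UNIV. h$i * D i x)"
      using frechet_derivative_at[OF D(3)[rule_format, of x]] by simp
    moreover have "(\<Sum>l\<in>UNIV. (axis i 1 :: real^'m)$l * D l x) = (\<Sum>l\<in>UNIV. if l = i then D i x else 0)"
      by (intro sum.cong) (auto simp: axis_def)
    ultimately show "pd i p x = D i x" unfolding pd_def by simp
  qed
  show "hp (d-1) (pd i p)" "d = 0 \<Longrightarrow> pd i p = (\<lambda>x. 0)"
     "(p has_derivative (\<lambda>h. \<Sum>i\<in>UNIV. h$i * pd i p x)) (at x)" using D by (simp_all add: e)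
qed

lemma vec_vderiv:
  assumes "\<And>i. ((\<lambda>t. f t $ i) has_real_derivative g i) (at t)"
  shows "(f has_vector_derivative (\<chi> i. g i)) (at t)"
  unfolding has_vector_derivative_def
proof (subst has_derivative_componentwise_within, intro ballI)
  fix b :: "real^'a" assume "b \<in> Basis"
  then obtain i where b: "b = axis i 1" unfolding Basis_vec_def by auto
  have e: "y \<bullet> b = y $ i" for y :: "real^'a" unfolding b by (simp add: inner_axis)
  show "((\<lambda>x. f x \<bullet> b) has_derivative (\<lambda>x. x *\<^sub>R vec_lambda g \<bullet> b)) (at t)"
    unfolding e using assms[of i, unfolded has_field_derivative_def]
    by (rule has_derivative_eq_rhs) (simp add: fun_eq_iff)
qed

lemma hp_chain:
  fixes p :: "real^'m::finite \<Rightarrow> real"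
  assumes "hp d p" and g: "(\<gamma> has_vector_derivative v) (at t)"
  shows "((\<lambda>t. p (\<gamma> t)) has_real_derivative (\<Sum>i\<in>UNIV. v$i * pd i p (\<gamma> t))) (at t)"
proof -
  have "((\<lambda>t. p (\<gamma> t)) has_derivative (\<lambda>s. \<Sum>i\<in>UNIV. (s *\<^sub>R v)$i * pd i p (\<gamma> t))) (at t)"
    using has_derivative_compose[OF g[unfolded has_vector_derivative_def] hp_pd(3)[OF assms(1)]] by simp
  then show ?thesis unfolding has_field_derivative_def
    by (rule has_derivative_eq_rhs) (simp add: fun_eq_iff sum_distrib_left algebra_simps)
qed

lemma hp_euler:
  fixes p :: "real^'m::finite \<Rightarrow> real"
  assumes "hp d p"
  shows "(\<Sum>i\<in>UNIV. x$i * pd i p x) = real d * p x"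
proof -
  have g: "((\<lambda>t. t *\<^sub>R x) has_vector_derivative x) (at 1)"
    using has_vector_derivative_scaleR[OF DERIV_ident has_vector_derivative_const] by simp
  have 1: "((\<lambda>t. p (t *\<^sub>R x)) has_real_derivative (\<Sum>i\<in>UNIV. x$i * pd i p x)) (at 1)"
    using hp_chain[OF assms g] by simp
  have "(\<lambda>t. p (t *\<^sub>R x)) = (\<lambda>t. t ^ d * p x)" using hp_homog[OF assms] by auto
  moreover have "((\<lambda>t. t ^ d * p x) has_real_derivative (real d * p x)) (at 1)"
    by (auto intro!: derivative_eq_intros)
  ultimately show ?thesis using 1 DERIV_unique by metis
qed



definition Fc :: "(real^'m::finite \<Rightarrow> real^'n::finite) \<Rightarrow> 'n \<Rightarrow> real^'m \<Rightarrow> real" where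
  "Fc F j = (\<lambda>x. F x $ j)"

lemma vd_first:
  fixes F :: "real^'m::finite \<Rightarrow> real^'n::finite"
  assumes hpF: "\<And>j. hp k (Fc F j)" and g1: "\<And>t. (\<gamma> has_vector_derivative \<gamma>1 t) (at t)"
  shows "vector_derivative (\<lambda>t. F (\<gamma> t)) (at s) = (\<chi> j. \<Sum>i\<in>UNIV. \<gamma>1 s $ i * pd i (Fc F j) (\<gamma> s))"
proof -
  have "((\<lambda>t. F (\<gamma> t)) has_vector_derivative (\<chi> j. \<Sum>i\<in>UNIV. \<gamma>1 s $ i * pd i (Fc F j) (\<gamma> s))) (at s)"
    by (rule vec_vderiv) (use hp_chain[OF hpF g1] in \<open>simp add: Fc_def\<close>)
  then show ?thesis by (rule vector_derivative_at)
qed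

lemma vd_second:
  fixes F :: "real^'m::finite \<Rightarrow> real^'n::finite"
  assumes hpF: "\<And>j. hp k (Fc F j)" and g1: "\<And>t. (\<gamma> has_vector_derivative \<gamma>1 t) (at t)"
    and g2: "\<And>i. ((\<lambda>s. \<gamma>1 s $ i) has_real_derivative (\<gamma>2 $ i)) (at t0)"
  shows "vector_derivative (\<lambda>s. vector_derivative (\<lambda>t. F (\<gamma> t)) (at s)) (at t0) =
    (\<chi> j. \<Sum>i\<in>UNIV. \<gamma>2 $ i * pd i (Fc F j) (\<gamma> t0) +
          \<gamma>1 t0 $ i * (\<Sum>l\<in>UNIV. \<gamma>1 t0 $ l * pd l (pd i (Fc F j)) (\<gamma> t0)))"
proof -
  have e: "(\<lambda>s. vector_derivative (\<lambda>t. F (\<gamma> t)) (at s)) = (\<lambda>s. \<chi> j. \<Sum>i\<in>UNIV. \<gamma>1 s $ i * pd i (Fc F j) (\<gamma> s))"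
    using vd_first[OF hpF g1] by auto
  have "((\<lambda>s. \<chi> j. \<Sum>i\<in>UNIV. \<gamma>1 s $ i * pd i (Fc F j) (\<gamma> s)) has_vector_derivative
    (\<chi> j. \<Sum>i\<in>UNIV. \<gamma>2 $ i * pd i (Fc F j) (\<gamma> t0) +
          \<gamma>1 t0 $ i * (\<Sum>l\<in>UNIV. \<gamma>1 t0 $ l * pd l (pd i (Fc F j)) (\<gamma> t0)))) (at t0)"
  proof (rule vec_vderiv)
    fix j
    have "((\<lambda>s. \<gamma>1 s $ i * pd i (Fc F j) (\<gamma> s)) has_real_derivative
       (\<gamma>2 $ i * pd i (Fc F j) (\<gamma> t0) + \<gamma>1 t0 $ i * (\<Sum>l\<in>UNIV. \<gamma>1 t0 $ l * pd l (pd i (Fc F j)) (\<gamma> t0)))) (at t0)" for i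
      using DERIV_mult[OF g2[of i] hp_chain[OF hp_pd(1)[OF hpF[of j], of i] g1[of t0]]] by (simp add: algebra_simps)
    then show "((\<lambda>s. (\<chi> j. \<Sum>i\<in>UNIV. \<gamma>1 s $ i * pd i (Fc F j) (\<gamma> s)) $ j) has_real_derivative
      (\<Sum>i\<in>UNIV. \<gamma>2 $ i * pd i (Fc F j) (\<gamma> t0) +
          \<gamma>1 t0 $ i * (\<Sum>l\<in>UNIV. \<gamma>1 t0 $ l * pd l (pd i (Fc F j)) (\<gamma> t0)))) (at t0)"
      by (simp add: DERIV_sum)
  qed
  then show ?thesis unfolding e by (rule vector_derivative_at)
qed

lemma geod_vd: "(geod x e has_vector_derivative (- sin t *\<^sub>R x + cos t *\<^sub>R e)) (at t)"
  unfolding geod_def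
  by (auto intro!: derivative_eq_intros simp: algebra_simps)

lemma geod_vd2: "((\<lambda>s. (- sin s *\<^sub>R x + cos s *\<^sub>R e) $ i) has_real_derivative ((- x) $ i)) (at 0)"
  by (auto intro!: derivative_eq_intros)

lemma dphi_formula:
  fixes F :: "real^'m::finite \<Rightarrow> real^'n::finite"
  assumes hpF: "\<And>j. hp k (Fc F j)"
  shows "dphi F x e = (\<chi> j. \<Sum>i\<in>UNIV. e $ i * pd i (Fc F j) x)"
  unfolding dphi_def using vd_first[OF hpF geod_vd, of x e 0] by (simp add: geod_def)

lemma hess_formula:
  fixes F :: "real^'m::finite \<Rightarrow> real^'n::finite"
  assumes hpF: "\<And>j. hp k (Fc F j)"
  shows "hess_amb F x e = (\<chi> j. \<Sum>i\<in>UNIV. - x $ i * pd i (Fc F j) x +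
          e $ i * (\<Sum>l\<in>UNIV. e $ l * pd l (pd i (Fc F j)) x))"
proof -
  have g: "(\<lambda>t. F (geod x e t)) = (\<lambda>t. F (geod x e t))" ..
  show ?thesis unfolding hess_amb_def
    using vd_second[OF hpF geod_vd geod_vd2, of x e] by (simp add: geod_def)
qed

lemma line_vd: "((\<lambda>t. x + t *\<^sub>R u) has_vector_derivative u) (at t)"
  by (auto intro!: derivative_eq_intros)

lemma sum_axis: "(\<Sum>l\<in>UNIV. (axis i 1 :: real^'m::finite) $ l * f l) = f i"
proof -
  have "(\<Sum>l\<in>UNIV. (axis i 1 :: real^'m) $ l * f l) = (\<Sum>l\<in>UNIV. if l = i then f i else 0)"
    by (intro sum.cong) (auto simp: axis_def)
  then show ?thesis by simp
qed

lemma second_partial_formula: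
  fixes F :: "real^'m::finite \<Rightarrow> real^'n::finite"
  assumes hpF: "\<And>j. hp k (Fc F j)"
  shows "second_partial F x (axis i 1) = (\<chi> j. pd i (pd i (Fc F j)) x)"
proof -
  have g2: "\<And>l. ((\<lambda>s. (axis i 1 :: real^'m) $ l) has_real_derivative (0 :: real^'m) $ l) (at 0)" by simp
  have "second_partial F x (axis i 1) = (\<chi> j. \<Sum>l\<in>UNIV. (axis i 1 :: real^'m) $ l * (\<Sum>m\<in>UNIV. (axis i 1 :: real^'m) $ m * pd m (pd l (Fc F j)) x))"
    unfolding second_partial_def using vd_second[OF hpF line_vd g2, of x] by simp
  also have "\<dots> = (\<chi> j. pd i (pd i (Fc F j)) x)"
    by (simp add: sum_axis)
  finally show ?thesis .
qed



definition onb :: "(real^'m::finite) set \<Rightarrow> bool" where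
  "onb B \<longleftrightarrow> finite B \<and> pairwise orthogonal B \<and> (\<forall>b\<in>B. norm b = 1) \<and> span B = UNIV"

lemma onb_expand:
  fixes v :: "real^'m::finite"
  assumes "onb B"
  shows "v = (\<Sum>b\<in>B. (v \<bullet> b) *\<^sub>R b)"
proof -
  have fin: "finite B" and po: "pairwise orthogonal B" and nb: "\<And>b. b \<in> B \<Longrightarrow> norm b = 1"
    and sp: "span B = UNIV" using assms unfolding onb_def by auto
  define w where "w = v - (\<Sum>b\<in>B. (v \<bullet> b) *\<^sub>R b)"
  have "orthogonal w c" if c: "c \<in> B" for c
  proof -
    have cc: "c \<bullet> c = 1" using nb[OF c] by (simp add: norm_eq_sqrt_inner)
    have "(\<Sum>b\<in>B. (v \<bullet> b) *\<^sub>R b) \<bullet> c = (\<Sum>b\<in>B. (v \<bullet> b) * (b \<bullet> c))"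
      by (simp add: inner_sum_left)
    also have "\<dots> = (v \<bullet> c) * (c \<bullet> c) + (\<Sum>b\<in>B-{c}. (v \<bullet> b) * (b \<bullet> c))"
      using fin c by (simp add: sum.remove)
    also have "(\<Sum>b\<in>B-{c}. (v \<bullet> b) * (b \<bullet> c)) = 0"
      using po c unfolding pairwise_def orthogonal_def by (intro sum.neutral) auto
    finally show ?thesis unfolding w_def orthogonal_def using cc by (simp add: inner_diff_left)
  qed
  then have "orthogonal w w" using orthogonal_to_span[of w B w] sp by (simp add: orthogonal_commute)
  then have "w = 0" by (simp add: orthogonal_def)
  then show ?thesis unfolding w_def by simp
qed

lemma onb_delta:
  assumes "onb (B :: (real^'m::finite) set)"
  shows "(\<Sum>b\<in>B. b$i * b$l) = (if i = l then 1 else 0)"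
proof -
  have e: "axis l 1 = (\<Sum>b\<in>B. (axis l 1 \<bullet> b) *\<^sub>R b)" by (rule onb_expand[OF assms])
  have "(axis l 1 :: real^'m) $ i = (\<Sum>b\<in>B. (axis l 1 \<bullet> b) *\<^sub>R b) $ i" using arg_cong[OF e, of "\<lambda>v. v $ i"] .
  then have "(axis l 1 :: real^'m) $ i = (\<Sum>b\<in>B. (axis l 1 \<bullet> b) * b $ i)" by simp
  moreover have "axis l 1 \<bullet> b = b $ l" for b :: "real^'m" by (simp add: inner_axis')
  ultimately have "(axis l 1 :: real^'m) $ i = (\<Sum>b\<in>B. b $ i * b $ l)" by (simp add: mult.commute)
  then show ?thesis by (simp add: axis_def split: if_splits)
qed

lemma onb_trace:
  assumes "onb (B :: (real^'m::finite) set)"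
  shows "(\<Sum>b\<in>B. \<Sum>i\<in>UNIV. \<Sum>l\<in>UNIV. b$i * b$l * c i l) = (\<Sum>i\<in>UNIV. c i i)"
proof -
  have "(\<Sum>b\<in>B. \<Sum>i\<in>UNIV. \<Sum>l\<in>UNIV. b$i * b$l * c i l) = (\<Sum>i\<in>UNIV. \<Sum>l\<in>UNIV. (\<Sum>b\<in>B. b$i * b$l) * c i l)"
    by (simp add: sum.swap[of _ B] sum_distrib_right)
  also have "\<dots> = (\<Sum>i\<in>UNIV. \<Sum>l\<in>UNIV. if l = i then c i i else 0)"
    using onb_delta[OF assms] by (intro sum.cong) auto
  also have "\<dots> = (\<Sum>i\<in>UNIV. c i i)" by simp
  finally show ?thesis .
qed

lemma tangent_basis_props:
  fixes x :: "real^'m::finite"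
  assumes x: "norm x = 1"
  defines "B \<equiv> tangent_basis x"
  shows "tangent_onb x B" "finite B" "x \<notin> B" "onb (insert x B)" "card B = CARD('m) - 1"
proof -
  let ?S = "{v::real^'m. v \<bullet> x = 0}"
  have sub: "subspace ?S"
    using subspace_orthogonal_to_vector[of x] by (simp add: orthogonal_def inner_commute)
  obtain B0 where "B0 \<subseteq> ?S" "pairwise orthogonal B0" "\<And>x. x \<in> B0 \<Longrightarrow> norm x = 1" "span B0 = ?S"
    using orthonormal_basis_subspace[OF sub] by metis
  then have "tangent_onb x B0" unfolding tangent_onb_def by auto
  then show to: "tangent_onb x B" unfolding B_def tangent_basis_def by (rule someI)
  then have BS: "B \<subseteq> ?S" and po: "pairwise orthogonal B" and nb: "\<forall>e\<in>B. norm e = 1" and sp: "span B = ?S"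
    unfolding tangent_onb_def by auto
  have xx: "x \<bullet> x = 1" using x by (simp add: norm_eq_sqrt_inner)
  show xB: "x \<notin> B" using BS xx by auto
  have z: "0 \<notin> insert x B" using nb x by auto
  have po': "pairwise orthogonal (insert x B)"
    using po BS unfolding pairwise_insert orthogonal_def by (auto simp: inner_commute)
  have ind: "independent (insert x B)" by (rule pairwise_orthogonal_independent[OF po' z])
  then have fin': "finite (insert x B)" by (rule independent_imp_finite)
  then show fin: "finite B" by simp
  have sp': "span (insert x B) = UNIV"
  proof -
    have "v \<in> span (insert x B)" for v
    proof -
      have "v - (v \<bullet> x) *\<^sub>R x \<in> ?S" using xx by (simp add: inner_diff_left)
      then have a: "v - (v \<bullet> x) *\<^sub>R x \<in> span (insert x B)" using sp span_mono[of B "insert x B"] by auto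
      have b: "(v \<bullet> x) *\<^sub>R x \<in> span (insert x B)" by (intro span_mul span_base) simp
      from span_add[OF a b] show ?thesis by simp
    qed
    then show ?thesis by auto
  qed
  show "onb (insert x B)" unfolding onb_def using fin' po' nb x sp' by auto
  have "card (insert x B) = dim (UNIV :: (real^'m) set)"
    by (rule basis_card_eq_dim) (use ind sp' in auto)
  then have "card (insert x B) = CARD('m)" by simp
  then show "card B = CARD('m) - 1" using fin xB by simp
qed



lemma line_chain:
  fixes p :: "real^'m::finite \<Rightarrow> real"
  assumes "hp d p"
  shows "((\<lambda>t. p (x + t *\<^sub>R axis i 1)) has_real_derivative pd i p (x + t *\<^sub>R axis i 1)) (at t)"
  using hp_chain[OF assms line_vd[of x "axis i 1" t]] by (simp add: sum_axis)

lemma qn_line: "qn (x + t *\<^sub>R axis i 1) = qn x + 2 * t * x$i + t^2"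
proof -
  have "qn (x + t *\<^sub>R axis i 1) = (\<Sum>l\<in>UNIV. x$l * x$l + (if l = i then 2 * t * x$i + t^2 else 0))"
    unfolding qn_def by (intro sum.cong) (auto simp: axis_def power2_eq_square algebra_simps)
  also have "\<dots> = qn x + 2 * t * x$i + t^2" unfolding qn_def by (simp add: sum.distrib)
  finally show ?thesis .
qed

lemma normsq_vec: "norm (v :: real^'n::finite) ^ 2 = (\<Sum>j\<in>UNIV. (v $ j)^2)"
  by (simp only: power2_norm_eq_inner) (simp add: inner_vec_def power2_eq_square)

lemma sq_identity_i:
  fixes F :: "real^'m::finite \<Rightarrow> real^'n::finite"
  assumes hpF: "\<And>j. hp k (Fc F j)" and nF: "\<And>y. norm (F y) = norm y ^ k" and x: "norm x = 1" and k: "k \<ge> 1"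
  shows "2 * (\<Sum>j\<in>UNIV. (pd i (Fc F j) x)^2 + Fc F j x * pd i (pd i (Fc F j)) x)
         = real k * ((real k - 1) * 4 * (x$i)^2 + 2)"
proof -
  define \<gamma> where "\<gamma> t = x + t *\<^sub>R axis i 1" for t
  define u where "u t = qn x + 2 * t * x$i + t^2" for t
  have qx: "qn x = 1" using x by (simp add: qn_norm)
  have eq: "(\<lambda>t. \<Sum>j\<in>UNIV. (Fc F j (\<gamma> t))^2) = (\<lambda>t. u t ^ k)"
  proof
    fix t
    have "(\<Sum>j\<in>UNIV. (Fc F j (\<gamma> t))^2) = norm (F (\<gamma> t)) ^ 2" by (simp add: normsq_vec Fc_def)
    also have "\<dots> = (norm (\<gamma> t) ^ 2) ^ k" by (simp add: nF power_mult[symmetric] mult.commute)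
    also have "\<dots> = u t ^ k" unfolding u_def \<gamma>_def qn_norm[symmetric] qn_line ..
    finally show "(\<Sum>j\<in>UNIV. (Fc F j (\<gamma> t))^2) = u t ^ k" .
  qed
  define \<phi>1 where "\<phi>1 t = (\<Sum>j\<in>UNIV. 2 * Fc F j (\<gamma> t) * pd i (Fc F j) (\<gamma> t))" for t
  define \<psi>1 where "\<psi>1 t = real k * u t ^ (k-1) * (2 * x$i + 2 * t)" for t
  have d\<phi>: "((\<lambda>t. \<Sum>j\<in>UNIV. (Fc F j (\<gamma> t))^2) has_real_derivative \<phi>1 t) (at t)" for t
    unfolding \<phi>1_def \<gamma>_def
    by (intro DERIV_sum) (auto intro!: derivative_eq_intros line_chain[OF hpF])
  have du: "(u has_real_derivative (2 * x$i + 2 * t)) (at t)" for t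
    unfolding u_def by (auto intro!: derivative_eq_intros)
  have d\<psi>: "((\<lambda>t. u t ^ k) has_real_derivative \<psi>1 t) (at t)" for t
    unfolding \<psi>1_def using DERIV_pow[of k] du[of t] DERIV_chain2 by (auto intro!: derivative_eq_intros)
  have e1: "\<phi>1 = \<psi>1"
  proof
    fix t
    have "((\<lambda>t. u t ^ k) has_real_derivative \<phi>1 t) (at t)" using d\<phi>[of t] unfolding eq .
    then show "\<phi>1 t = \<psi>1 t" using d\<psi>[of t] by (rule DERIV_unique)
  qed
  have d\<phi>1: "(\<phi>1 has_real_derivative (\<Sum>j\<in>UNIV. 2 * (pd i (Fc F j) x * pd i (Fc F j) x + Fc F j x * pd i (pd i (Fc F j)) x))) (at 0)"
    unfolding \<phi>1_def \<gamma>_def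
    by (intro DERIV_sum) (auto intro!: derivative_eq_intros line_chain[OF hpF] line_chain[OF hp_pd(1)[OF hpF]] simp: algebra_simps)
  have d\<psi>1: "(\<psi>1 has_real_derivative real k * (real (k-1) * u 0 ^ (k-1-1) * (2 * x$i) * (2 * x$i) + u 0 ^ (k-1) * 2)) (at 0)"
    unfolding \<psi>1_def by (auto intro!: derivative_eq_intros du simp: algebra_simps)
  have "(\<Sum>j\<in>UNIV. 2 * (pd i (Fc F j) x * pd i (Fc F j) x + Fc F j x * pd i (pd i (Fc F j)) x))
      = real k * (real (k-1) * u 0 ^ (k-1-1) * (2 * x$i) * (2 * x$i) + u 0 ^ (k-1) * 2)"
    using d\<phi>1 d\<psi>1 unfolding e1 by (rule DERIV_unique)
  moreover have "u 0 = 1" unfolding u_def using qx by simp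
  moreover have "real (k-1) = real k - 1" using k by simp
  ultimately show ?thesis by (simp add: sum_distrib_left power2_eq_square algebra_simps)
qed

lemma sq_identity:
  fixes F :: "real^'m::finite \<Rightarrow> real^'n::finite"
  assumes hpF: "\<And>j. hp k (Fc F j)" and nF: "\<And>y. norm (F y) = norm y ^ k" and x: "norm x = 1" and k: "k \<ge> 1"
  shows "(\<Sum>i\<in>UNIV. \<Sum>j\<in>UNIV. (pd i (Fc F j) x)^2) + (\<Sum>j\<in>UNIV. Fc F j x * (\<Sum>i\<in>UNIV. pd i (pd i (Fc F j)) x))
         = real k * (2 * real k + real CARD('m) - 2)"
proof -
  have qx: "(\<Sum>i\<in>UNIV. (x$i)^2) = 1" using x by (simp add: normsq_vec[symmetric])
  have "2 * ((\<Sum>i\<in>UNIV. \<Sum>j\<in>UNIV. (pd i (Fc F j) x)^2) + (\<Sum>j\<in>UNIV. Fc F j x * (\<Sum>i\<in>UNIV. pd i (pd i (Fc F j)) x)))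
      = (\<Sum>i\<in>UNIV. 2 * (\<Sum>j\<in>UNIV. (pd i (Fc F j) x)^2 + Fc F j x * pd i (pd i (Fc F j)) x))"
    by (simp add: sum.distrib sum_distrib_left sum.swap[of _ "UNIV::'m set"] algebra_simps)
  also have "\<dots> = (\<Sum>i\<in>UNIV. real k * ((real k - 1) * 4 * (x$i)^2 + 2))"
    using sq_identity_i[OF hpF nF x k] by simp
  also have "\<dots> = (\<Sum>i\<in>UNIV. (real k * (real k - 1) * 4) * (x$i)^2 + real k * 2)"
    by (intro sum.cong) (auto simp: algebra_simps)
  also have "\<dots> = (real k * (real k - 1) * 4) * (\<Sum>i\<in>UNIV. (x$i)^2) + real k * 2 * real CARD('m)"
    by (simp add: sum.distrib sum_distrib_left[symmetric])
  also have "\<dots> = 2 * (real k * (2 * real k + real CARD('m) - 2))" using qx by (simp add: algebra_simps)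
  finally show ?thesis by simp
qed



lemma trace_tangent:
  fixes x :: "real^'m::finite"
  assumes x: "norm x = 1"
  shows "(\<Sum>e\<in>tangent_basis x. \<Sum>i\<in>UNIV. \<Sum>l\<in>UNIV. e$i * e$l * c i l)
       = (\<Sum>i\<in>UNIV. c i i) - (\<Sum>i\<in>UNIV. \<Sum>l\<in>UNIV. x$i * x$l * c i l)"
proof -
  note tb = tangent_basis_props[OF x]
  have "(\<Sum>e\<in>insert x (tangent_basis x). \<Sum>i\<in>UNIV. \<Sum>l\<in>UNIV. e$i * e$l * c i l) = (\<Sum>i\<in>UNIV. c i i)"
    by (rule onb_trace[OF tb(4)])
  then show ?thesis using tb(2,3) by simp
qed

lemma euler2:
  fixes p :: "real^'m::finite \<Rightarrow> real"
  assumes "hp k p"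
  shows "(\<Sum>i\<in>UNIV. \<Sum>l\<in>UNIV. x$i * x$l * pd l (pd i p) x) = real k * (real k - 1) * p x"
proof (cases "k = 0")
  case True
  then have "pd i p = (\<lambda>x. 0)" for i using hp_pd(2)[OF assms] by simp
  then have "pd l (pd i p) = (\<lambda>x. 0)" for i l using hp_pd(2)[OF hp_zero[of 0]] by simp
  then show ?thesis using True by simp
next
  case False
  have "(\<Sum>l\<in>UNIV. x$l * pd l (pd i p) x) = real (k-1) * pd i p x" for i
    by (rule hp_euler[OF hp_pd(1)[OF assms]])
  then have "(\<Sum>i\<in>UNIV. \<Sum>l\<in>UNIV. x$i * x$l * pd l (pd i p) x) = (\<Sum>i\<in>UNIV. x$i * (real (k-1) * pd i p x))"
    by (simp add: sum_distrib_left[symmetric] mult.assoc)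
  also have "\<dots> = real (k-1) * (\<Sum>i\<in>UNIV. x$i * pd i p x)" by (simp add: sum_distrib_left algebra_simps)
  also have "\<dots> = real (k-1) * (real k * p x)" using hp_euler[OF assms] by simp
  finally show ?thesis using False by (simp add: of_nat_diff algebra_simps)
qed



theorem mainTheorem1:
  fixes F :: "real^'m \<Rightarrow> real^'n" and k :: nat
  assumes "CARD('m) \<ge> 2" and "CARD('n) \<ge> 2" and "k \<ge> 1"
    and "is_form k F"
    and "\<forall>x. norm (F x) = norm x ^ k"
    and "\<not> (\<exists>(G :: real^'m \<Rightarrow> real^'n) d. d < k \<and> is_form d G
                \<and> (\<forall>x\<in>unit_sphere. G x = F x))"
    and "harmonic_sph F"
  shows "(\<forall>x\<in>unit_sphere.
            energy_density F x = real k * (real k + real (CARD('m) - 1) - 1) / 2)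
         \<and> (\<forall>x. lap0 F x = 0)"
proof -
  note card = assms(1) and k = assms(3) and nF = assms(5)[rule_format] and minimal = assms(6)
  have hpF: "hp k (Fc F j)" for j using assms(4) unfolding is_form_def Fc_def by (simp add: hom_poly_iff_hp)
  define L where "L j x = (\<Sum>i\<in>UNIV. pd i (pd i (Fc F j)) x)" for j x
  have lap: "lap0 F x = - (\<chi> j. L j x)" for x
    unfolding lap0_def second_partial_formula[OF hpF] L_def by (simp add: vec_eq_iff)
  have Fn1: "norm (F x) = 1" if "norm x = 1" for x using nF[of x] that by simp
  have harm: "(\<chi> j. L j x) = ((\<chi> j. L j x) \<bullet> F x) *\<^sub>R F x" if x: "norm x = 1" for x
  proof -
    define \<mu> where "\<mu> = real k * (real k - 1) + real (CARD('m) - 1) * real k"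
    have comp: "(\<Sum>e\<in>tangent_basis x. hess_amb F x e) $ j = L j x - \<mu> * F x $ j" for j
    proof -
      have "(\<Sum>e\<in>tangent_basis x. hess_amb F x e) $ j
          = (\<Sum>e\<in>tangent_basis x. (- (\<Sum>i\<in>UNIV. x $ i * pd i (Fc F j) x) +
               (\<Sum>i\<in>UNIV. \<Sum>l\<in>UNIV. e$i * e$l * pd l (pd i (Fc F j)) x)))"
        unfolding hess_formula[OF hpF] sum_component by (intro sum.cong) (simp_all add: sum.distrib sum_distrib_left mult.assoc sum_negf sum_subtractf)
      also have "\<dots> = - real (card (tangent_basis x)) * (\<Sum>i\<in>UNIV. x $ i * pd i (Fc F j) x) +
            (\<Sum>e\<in>tangent_basis x. \<Sum>i\<in>UNIV. \<Sum>l\<in>UNIV. e$i * e$l * pd l (pd i (Fc F j)) x)"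
        by (simp add: sum.distrib sum_subtractf)
      also have "\<dots> = - real (CARD('m) - 1) * (real k * F x $ j) +
            (L j x - real k * (real k - 1) * F x $ j)"
        unfolding trace_tangent[OF x] euler2[OF hpF] hp_euler[OF hpF] tangent_basis_props(5)[OF x]
        by (simp add: L_def Fc_def)
      finally show ?thesis unfolding \<mu>_def by (simp add: algebra_simps)
    qed
    have v: "(\<Sum>e\<in>tangent_basis x. hess_amb F x e) = (\<chi> j. L j x) - \<mu> *\<^sub>R F x"
      using comp by (simp add: vec_eq_iff)
    have FF: "F x \<bullet> F x = 1" using Fn1[OF x] by (simp add: norm_eq_sqrt_inner)
    have "tension F x = 0" using assms(7) x unfolding harmonic_sph_def unit_sphere_def by auto
    then have "(\<chi> j. L j x) - \<mu> *\<^sub>R F x - (((\<chi> j. L j x) - \<mu> *\<^sub>R F x) \<bullet> F x) *\<^sub>R F x = 0"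
      unfolding tension_def Let_def v .
    then show ?thesis using FF by (simp add: inner_diff_left algebra_simps)
  qed
  have L0: "L j x = 0" for j x
  proof (cases "k = 1")
    case True
    have "pd i (Fc F j) = (\<lambda>x. 0) \<or> True" for i j by simp
    have "pd l (pd i (Fc F j)) = (\<lambda>x. 0)" for i l j
      using hp_pd(2)[OF hp_pd(1)[OF hpF[of j]], of l i] True by simp
    then show ?thesis unfolding L_def by simp
  next
    case False
    then have k2: "k \<ge> 2" using k by simp
    have hpL: "hp (k-2) (L j)" for j
      unfolding L_def using hp_pd(1)[OF hp_pd(1)[OF hpF]] by (intro hp_sum) (auto simp: diff_diff_add numeral_2_eq_2)
    define P where "P x = (\<Sum>j\<in>UNIV. L j x * Fc F j x)" for x
    have hpP: "hp (2*k-2) P"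
    proof -
      have "hp (k - 2 + k) (\<lambda>x. L j x * Fc F j x)" for j by (rule hp_mult[OF hpL hpF])
      moreover have "k - 2 + k = 2*k-2" using k2 by simp
      ultimately show ?thesis unfolding P_def by (intro hp_sum) auto
    qed
    have ident: "P x * Fc F j x = qn x ^ k * L j x" for j x
    proof (cases "x = 0")
      case True
      then show ?thesis using hp_at0[OF hpF k] k by (simp add: qn_norm)
    next
      case False
      define n where "n = norm x"
      define u where "u = (1 / n) *\<^sub>R x"
      have n: "n > 0" using False unfolding n_def by simp
      have xu: "x = n *\<^sub>R u" unfolding u_def using n by simp
      have u1: "norm u = 1" unfolding u_def n_def using False by simp
      have Pu: "L j u = P u * Fc F j u" for j
      proof -
        have "L j u = (((\<chi> j. L j u) \<bullet> F u) *\<^sub>R F u) $ j" using harm[OF u1] by (metis vec_lambda_beta)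
        also have "(\<chi> j. L j u) \<bullet> F u = P u" unfolding P_def Fc_def inner_vec_def by simp
        finally show ?thesis by (simp add: Fc_def)
      qed
      have "P x * Fc F j x = n ^ (2*k-2) * P u * (n ^ k * Fc F j u)"
        unfolding xu using hp_homog[OF hpP] hp_homog[OF hpF] by simp
      also have "\<dots> = n ^ (2*k-2+k) * (P u * Fc F j u)" by (simp add: power_add algebra_simps)
      also have "2*k-2+k = 2*k + (k-2)" using k2 by simp
      also have "n ^ (2*k + (k-2)) * (P u * Fc F j u) = (n^2)^k * (n^(k-2) * L j u)"
        by (simp add: power_add power_mult[symmetric] Pu algebra_simps)
      also have "\<dots> = qn x ^ k * L j x" unfolding xu using hp_homog[OF hpL] n
        by (simp add: qn_norm u1)
      finally show ?thesis .
    qed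
    obtain j0 where nd: "nondiv k (Fc F j0)"
    proof (rule ccontr)
      assume "\<not> thesis"
      then have "\<forall>j. \<exists>H. hp (k-2) H \<and> (\<forall>x. Fc F j x = qn x * H x)" using that unfolding nondiv_def by blast
      then obtain H where H: "\<And>j. hp (k-2) (H j)" "\<And>j x. Fc F j x = qn x * H j x" by metis
      define G where "G x = (\<chi> j. H j x)" for x
      have "is_form (k-2) G" unfolding is_form_def G_def using H(1) by (simp add: hp_hom_poly)
      moreover have "k - 2 < k" using k by simp
      moreover have "\<forall>x\<in>unit_sphere. G x = F x"
      proof
        fix x :: "real^'m" assume "x \<in> unit_sphere"
        then have "qn x = 1" unfolding unit_sphere_def by (simp add: qn_norm)
        then show "G x = F x" unfolding G_def using H(2) by (simp add: vec_eq_iff Fc_def)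
      qed
      ultimately show False using minimal by blast
    qed
    have P0: "P x = 0" for x
      by (rule alg[OF card k hpF nd hpP hp_linepoly[OF hpL] ident])
    show ?thesis
    proof (cases "x = 0")
      case False
      then have "qn x > 0" by (simp add: qn_norm)
      then have "qn x ^ k \<noteq> 0" by simp
      then show ?thesis using ident[of x j] P0[of x] by auto
    next
      case True
      define y where "y = (axis undefined 1 :: real^'m)"
      have "qn y ^ k \<noteq> 0" unfolding y_def by (simp add: qn_norm)
      then have "L j y = 0" using ident[of y j] P0[of y] by auto
      then show ?thesis using hp_homog[OF hpL[of j], of 0 y] True by simp
    qed
  qed
  have lapF: "lap0 F x = 0" for x unfolding lap using L0 by (simp add: vec_eq_iff)
  have energy: "energy_density F x = real k * (real k + real (CARD('m) - 1) - 1) / 2" if x: "norm x = 1" for x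
  proof -
    define c where "c i l = (\<Sum>j\<in>UNIV. pd i (Fc F j) x * pd l (Fc F j) x)" for i l
    have nd: "(norm (dphi F x e))^2 = (\<Sum>i\<in>UNIV. \<Sum>l\<in>UNIV. e$i * e$l * c i l)" for e
    proof -
      have "(norm (dphi F x e))^2 = (\<Sum>j\<in>UNIV. (\<Sum>i\<in>UNIV. e $ i * pd i (Fc F j) x)^2)"
        unfolding dphi_formula[OF hpF] normsq_vec by simp
      also have "\<dots> = (\<Sum>j\<in>UNIV. \<Sum>i\<in>UNIV. \<Sum>l\<in>UNIV. e$i * e$l * (pd i (Fc F j) x * pd l (Fc F j) x))"
        by (simp add: power2_eq_square sum_product algebra_simps)
      also have "\<dots> = (\<Sum>i\<in>UNIV. \<Sum>l\<in>UNIV. e$i * e$l * c i l)"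
        unfolding c_def by (simp add: sum_distrib_left sum.swap[of _ "UNIV::'n set"])
      finally show ?thesis .
    qed
    have xterm: "(\<Sum>i\<in>UNIV. \<Sum>l\<in>UNIV. x$i * x$l * c i l) = real k ^ 2"
    proof -
      have "(\<Sum>i\<in>UNIV. \<Sum>l\<in>UNIV. x$i * x$l * c i l) = (\<Sum>j\<in>UNIV. (\<Sum>i\<in>UNIV. x $ i * pd i (Fc F j) x)^2)"
        unfolding c_def by (simp add: power2_eq_square sum_product sum_distrib_left sum.swap[of _ "UNIV::'n set"] algebra_simps)
      also have "\<dots> = (\<Sum>j\<in>UNIV. (real k * Fc F j x)^2)" using hp_euler[OF hpF] by simp
      also have "\<dots> = real k ^ 2 * (norm (F x))^2" by (simp add: normsq_vec Fc_def power_mult_distrib sum_distrib_left)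
      finally show ?thesis using Fn1[OF x] by simp
    qed
    have tr: "(\<Sum>i\<in>UNIV. c i i) = real k * (2 * real k + real CARD('m) - 2)"
    proof -
      have "(\<Sum>i\<in>UNIV. c i i) = (\<Sum>i\<in>UNIV. \<Sum>j\<in>UNIV. (pd i (Fc F j) x)^2)" unfolding c_def by (simp add: power2_eq_square)
      then show ?thesis using sq_identity[OF hpF nF x k] L0 unfolding L_def by simp
    qed
    have "energy_density F x = (real k * (2 * real k + real CARD('m) - 2) - real k ^ 2) / 2"
      unfolding energy_density_def nd trace_tangent[OF x] xterm tr ..
    moreover have "real (CARD('m) - 1) = real CARD('m) - 1" using card by simp
    ultimately show ?thesis by (simp add: power2_eq_square algebra_simps)
  qed
  show ?thesis using energy lapF unfolding unit_sphere_def by auto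
qed

end
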